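(* Let $p$ be prime and $H\le\mathrm{S}_n$ be in $\mathfrak{InP}(\mathrm{C}_p)$, with $B$, $\gamma$, $M$ and the standard generators as in the context. Let $b\in N_B(H)$ and let $x,y$ be standard generators of $H$ whose supports are not disjoint. Then there exists $a\in\mathbb{F}_p^*$ such that $x^b=x^a$ and $y^b=y^a$.
   Context: $H\le\mathrm{S}_{n}$, $n=pk$, has orbits $\Omega_1,\dots,\Omega_k$ of size $p$ with each $G_i:=H|_{\Omega_i}$ cyclic of order $p$; $|H|=p^s$ and the orbits are ordered so that $|H|_{\Omega_1\cup\dots\cup\Omega_s}|=p^s$. $G=G_1\times\dots\times G_k$, $g_i$ generates $G_i$ (chosen as conjugates of $g_1$ via bijections witnessing permutation isomorphisms $G_1\to G_i$), and $\gamma:G\to\mathbb{F}_p^k$ is $\gamma(g_1^{r_1}\cdots g_k^{r_k})=(r_1,\dots,r_k)$, with $\mathbb{F}_p$ identified with $\{0,\dots,p-1\}$. $B=\langle N_{\mathrm{Sym}(\Omega_i)}(G_i)\rangle$. $M\in\mathrm{M}(s,k,p)$ is the generator matrix of $\gamma(H)$ in standard form (its first $s$ columns form the identity $I_s$), and the standard generators of $H$ are $x_i=\gamma^{-1}(M_{i,*})$, $1\le i\le s$, where $M_{i,*}$ is the $i$-th row. The support of a permutation is its set of moved points. *)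

theory Defs
  imports "HOL-Combinatorics.Permutations" "HOL-Computational_Algebra.Primes"
begin

(* Permutations of nat are total functions; a permutation of a set A is one that
   "permutes A" (bijective, identity outside A). Composition f \<circ> g means "first g then f". *)

definition perm_orbit :: "(nat \<Rightarrow> nat) set \<Rightarrow> nat \<Rightarrow> nat set" where
  "perm_orbit H z = {h z | h. h \<in> H}"

definition restr_perm :: "(nat \<Rightarrow> nat) \<Rightarrow> nat set \<Rightarrow> (nat \<Rightarrow> nat)" where
  "restr_perm h A = (\<lambda>z. if z \<in> A then h z else z)"

definition restr_group :: "(nat \<Rightarrow> nat) set \<Rightarrow> nat set \<Rightarrow> (nat \<Rightarrow> nat) set" where
  "restr_group H A = (\<lambda>h. restr_perm h A) ` H"

(* conjugation x^b = b^{-1} x b in right-action notation, i.e. b \<circ> x \<circ> inv b as functions *)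
definition conjp :: "(nat \<Rightarrow> nat) \<Rightarrow> (nat \<Rightarrow> nat) \<Rightarrow> (nat \<Rightarrow> nat)" where
  "conjp x b = b \<circ> x \<circ> inv b"

definition sym_normalizer :: "nat set \<Rightarrow> (nat \<Rightarrow> nat) set \<Rightarrow> (nat \<Rightarrow> nat) set" where
  "sym_normalizer A K = {\<sigma>. \<sigma> permutes A \<and> (\<lambda>\<tau>. conjp \<tau> \<sigma>) ` K = K}"

inductive_set perm_gen :: "(nat \<Rightarrow> nat) set \<Rightarrow> (nat \<Rightarrow> nat) set" for S where
  gen_id: "id \<in> perm_gen S"
| gen_mult: "s \<in> S \<Longrightarrow> f \<in> perm_gen S \<Longrightarrow> s \<circ> f \<in> perm_gen S"
| gen_inv: "s \<in> S \<Longrightarrow> f \<in> perm_gen S \<Longrightarrow> inv s \<circ> f \<in> perm_gen S"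

definition Bgroup :: "(nat \<Rightarrow> nat) set \<Rightarrow> (nat \<Rightarrow> nat set) \<Rightarrow> nat \<Rightarrow> (nat \<Rightarrow> nat) set" where
  "Bgroup H \<Omega> k = perm_gen (\<Union>i<k. sym_normalizer (\<Omega> i) (restr_group H (\<Omega> i)))"

definition normalizer_in :: "(nat \<Rightarrow> nat) set \<Rightarrow> (nat \<Rightarrow> nat) set \<Rightarrow> (nat \<Rightarrow> nat) set" where
  "normalizer_in B H = {b \<in> B. (\<lambda>h. conjp h b) ` H = H}"

(* vectors of F_p^k, F_p identified with {0..<p}; coordinates \<ge> k are 0 *)
definition Fvecs :: "nat \<Rightarrow> nat \<Rightarrow> (nat \<Rightarrow> nat) set" where
  "Fvecs p k = {v. (\<forall>j<k. v j < p) \<and> (\<forall>j\<ge>k. v j = 0)}"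

(* \<gamma>^{-1}(r_1,...,r_k) = g_1^{r_1} \<cdots> g_k^{r_k} *)
definition gamma_inv :: "(nat \<Rightarrow> nat \<Rightarrow> nat) \<Rightarrow> nat \<Rightarrow> (nat \<Rightarrow> nat) \<Rightarrow> (nat \<Rightarrow> nat)" where
  "gamma_inv g k v = foldr (\<lambda>j f. (g j ^^ v j) \<circ> f) [0..<k] id"

definition gamma_image :: "(nat \<Rightarrow> nat \<Rightarrow> nat) \<Rightarrow> nat \<Rightarrow> nat \<Rightarrow> (nat \<Rightarrow> nat) set \<Rightarrow> (nat \<Rightarrow> nat) set" where
  "gamma_image g p k H = {v \<in> Fvecs p k. gamma_inv g k v \<in> H}"

definition row_space :: "nat \<Rightarrow> nat \<Rightarrow> nat \<Rightarrow> (nat \<Rightarrow> nat \<Rightarrow> nat) \<Rightarrow> (nat \<Rightarrow> nat) set" where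
  "row_space p s k M = {(\<lambda>j. if j < k then (\<Sum>i<s. c i * M i j) mod p else 0) | c. \<forall>i<s. c i < p}"

definition std_gen_matrix :: "nat \<Rightarrow> nat \<Rightarrow> nat \<Rightarrow> (nat \<Rightarrow> nat \<Rightarrow> nat) \<Rightarrow> (nat \<Rightarrow> nat) set \<Rightarrow> bool" where
  "std_gen_matrix p s k M C \<longleftrightarrow>
     (\<forall>i<s. \<forall>j<k. M i j < p) \<and>
     (\<forall>i<s. \<forall>j<s. M i j = (if i = j then 1 else 0)) \<and>
     row_space p s k M = C"

definition mrow :: "nat \<Rightarrow> (nat \<Rightarrow> nat \<Rightarrow> nat) \<Rightarrow> nat \<Rightarrow> (nat \<Rightarrow> nat)" where
  "mrow k M i = (\<lambda>j. if j < k then M i j else 0)"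

definition supp :: "(nat \<Rightarrow> nat) \<Rightarrow> nat set" where
  "supp x = {z. x z \<noteq> z}"

end

theory Submission
  imports Defs
begin


lemma funpow_fix: "q z = z \<Longrightarrow> (q^^m) z = z"
  by (induction m) auto

lemma funpow_into: "\<forall>z\<in>A. q z \<in> A \<Longrightarrow> z \<in> A \<Longrightarrow> (q^^m) z \<in> A"
  by (induction m) auto

lemma funpow_agree: "\<forall>z\<in>A. f z = q z \<Longrightarrow> \<forall>z\<in>A. q z \<in> A \<Longrightarrow> z \<in> A \<Longrightarrow> (f^^m) z = (q^^m) z"
proof (induction m)
  case 0 then show ?case by simp
next
  case (Suc m)
  assume a1: "\<forall>z\<in>A. f z = q z" and a2: "\<forall>z\<in>A. q z \<in> A" and z: "z \<in> A"
  have "(q^^m) z \<in> A" using funpow_into[OF a2 z] .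
  then have "f ((q^^m) z) = q ((q^^m) z)" using a1 by blast
  then show ?case using Suc.IH[OF a1 a2 z] by simp
qed

lemma funpow_conj_iter:
  assumes a1: "\<forall>z\<in>A. q z \<in> A" and a2: "\<forall>z\<in>A. b (q z) = (q^^a) (b z)" and z: "z \<in> A"
  shows "b ((q^^m) z) = (q^^(a*m)) (b z)"
proof (induction m)
  case 0 then show ?case by simp
next
  case (Suc m)
  have inA: "(q^^m) z \<in> A" using funpow_into[OF a1 z] .
  have "b ((q^^Suc m) z) = b (q ((q^^m) z))" by simp
  also have "\<dots> = (q^^a) (b ((q^^m) z))" using a2 inA by blast
  also have "\<dots> = (q^^a) ((q^^(a*m)) (b z))" using Suc.IH by (rule arg_cong)
  also have "\<dots> = (q^^(a + a*m)) (b z)" by (simp only: funpow_add comp_apply)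
  also have "a + a*m = a * Suc m" by simp
  finally show ?case .
qed

lemma foldr_pt:
  assumes "distinct L"
    and "\<forall>m\<in>set L. (\<forall>z. z \<notin> \<Omega> m \<longrightarrow> q m z = z) \<and> (\<forall>z\<in>\<Omega> m. q m z \<in> \<Omega> m)"
    and "\<forall>m\<in>set L. m \<noteq> j \<longrightarrow> \<Omega> m \<inter> \<Omega> j = {}"
    and "z \<in> \<Omega> j"
  shows "foldr (\<lambda>m f. q m \<circ> f) L id z = (if j \<in> set L then q j z else z)"
  using assms
proof (induction L)
  case Nil then show ?case by simp
next
  case (Cons m L)
  let ?F = "foldr (\<lambda>m f. q m \<circ> f) L id"
  have IH: "?F z = (if j \<in> set L then q j z else z)" by (rule Cons.IH) (use Cons.prems in auto)
  have st: "foldr (\<lambda>m f. q m \<circ> f) (m # L) id z = q m (?F z)" by simp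
  show ?case
  proof (cases "m = j")
    case True
    have nj: "j \<notin> set L" using Cons.prems(1) True by simp
    have "?F z = z" using IH by (simp only: if_not_P[OF nj])
    then show ?thesis using True by (subst st) simp
  next
    case False
    have "?F z \<in> \<Omega> j" using IH Cons.prems by auto
    then have "?F z \<notin> \<Omega> m" using Cons.prems(3) False by auto
    then have "q m (?F z) = ?F z" using Cons.prems(2) by auto
    moreover have "(j \<in> set (m # L)) = (j \<in> set L)" using False by simp
    ultimately show ?thesis using IH by (subst st) simp
  qed
qed

lemma restr_pow:
  assumes "\<forall>z\<in>A. h z \<in> A"
  shows "restr_perm (h^^m) A = (restr_perm h A)^^m"
proof
  fix z
  show "restr_perm (h^^m) A z = (restr_perm h A ^^ m) z"
  proof (cases "z \<in> A")
    case True
    have "(restr_perm h A ^^ m) z = (h^^m) z"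
      by (rule funpow_agree[symmetric]) (use assms True in \<open>auto simp: restr_perm_def\<close>)
    then show ?thesis using True by (simp add: restr_perm_def)
  next
    case False
    then show ?thesis by (simp add: restr_perm_def funpow_fix)
  qed
qed

lemma restr_inj:
  assumes "inj h" "\<forall>z\<in>A. h z \<in> A"
  shows "inj (restr_perm h A)"
proof (rule injI)
  fix x y assume e: "restr_perm h A x = restr_perm h A y"
  show "x = y"
  proof (cases "x \<in> A"; cases "y \<in> A")
    assume "x \<in> A" "y \<in> A" then show ?thesis using e assms(1) by (simp add: restr_perm_def inj_def)
  next
    assume "x \<in> A" "y \<notin> A" then show ?thesis using e assms(2) by (auto simp add: restr_perm_def)
  next
    assume "x \<notin> A" "y \<in> A" then show ?thesis using e assms(2) by (auto simp add: restr_perm_def)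
  next
    assume "x \<notin> A" "y \<notin> A" then show ?thesis using e by (simp add: restr_perm_def)
  qed
qed

lemma normalizer_inv:
  assumes "s \<in> sym_normalizer A K"
  shows "inv s \<in> sym_normalizer A K"
proof -
  have sp: "s permutes A" and im: "(\<lambda>\<tau>. conjp \<tau> s) ` K = K"
    using assms by (auto simp: sym_normalizer_def)
  have b: "bij s" using sp permutes_bij by blast
  have ii: "inv (inv s) = s" using b inv_inv_eq by blast
  have c1: "conjp (conjp \<tau> s) (inv s) = \<tau>" for \<tau>
    unfolding conjp_def ii by (simp add: fun_eq_iff permutes_inverses[OF sp])
  have "(\<lambda>\<tau>. conjp \<tau> (inv s)) ` K = K"
  proof
    show "(\<lambda>\<tau>. conjp \<tau> (inv s)) ` K \<subseteq> K"
    proof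
      fix t assume "t \<in> (\<lambda>\<tau>. conjp \<tau> (inv s)) ` K"
      then obtain \<tau> where "\<tau> \<in> K" "t = conjp \<tau> (inv s)" by auto
      then obtain \<tau>' where "\<tau>' \<in> K" "\<tau> = conjp \<tau>' s" using im by blast
      then have "t = \<tau>'" using c1[of \<tau>'] \<open>t = _\<close> by simp
      then show "t \<in> K" using \<open>\<tau>' \<in> K\<close> by simp
    qed
  next
    show "K \<subseteq> (\<lambda>\<tau>. conjp \<tau> (inv s)) ` K"
    proof
      fix t assume "t \<in> K"
      then have "conjp t s \<in> K" using im by blast
      then show "t \<in> (\<lambda>\<tau>. conjp \<tau> (inv s)) ` K" using c1[of t] by (metis image_eqI)
    qed
  qed
  then show ?thesis using permutes_inv[OF sp] by (simp add: sym_normalizer_def)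
qed

definition Bprop :: "nat \<Rightarrow> (nat \<Rightarrow> nat set) \<Rightarrow> (nat \<Rightarrow> nat \<Rightarrow> nat) \<Rightarrow> (nat \<Rightarrow> nat) \<Rightarrow> bool" where
  "Bprop k \<Omega> g b \<longleftrightarrow> inj b \<and> (\<forall>j<k. b ` \<Omega> j = \<Omega> j \<and> (\<exists>a. \<forall>z\<in>\<Omega> j. b (g j z) = (g j ^^ a) (b z)))"

lemma Bprop_comp:
  assumes "\<forall>j<k. \<forall>z\<in>\<Omega> j. g j z \<in> \<Omega> j" "Bprop k \<Omega> g s" "Bprop k \<Omega> g f"
  shows "Bprop k \<Omega> g (s \<circ> f)"
  unfolding Bprop_def
proof (intro conjI allI impI)
  show "inj (s \<circ> f)" using assms by (simp add: Bprop_def inj_compose)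
next
  fix j assume j: "j < k"
  have "s ` (f ` \<Omega> j) = \<Omega> j" using assms j by (simp add: Bprop_def)
  then show "(s \<circ> f) ` \<Omega> j = \<Omega> j" by (simp add: image_comp)
  obtain as where as: "\<forall>z\<in>\<Omega> j. s (g j z) = (g j ^^ as) (s z)" using assms(2) j unfolding Bprop_def by blast
  obtain af where af: "\<forall>z\<in>\<Omega> j. f (g j z) = (g j ^^ af) (f z)" using assms(3) j unfolding Bprop_def by blast
  have fz: "f z \<in> \<Omega> j" if "z \<in> \<Omega> j" for z using assms(3) j that by (auto simp: Bprop_def)
  have "\<forall>z\<in>\<Omega> j. (s \<circ> f) (g j z) = (g j ^^ (as*af)) ((s \<circ> f) z)"
  proof
    fix z assume z: "z \<in> \<Omega> j"
    have "(s \<circ> f) (g j z) = s ((g j ^^ af) (f z))" using af z by simp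
    also have "\<dots> = (g j ^^ (as*af)) (s (f z))"
      by (rule funpow_conj_iter) (use assms(1) j as fz z in auto)
    finally show "(s \<circ> f) (g j z) = (g j ^^ (as*af)) ((s \<circ> f) z)" by simp
  qed
  then show "\<exists>a. \<forall>z\<in>\<Omega> j. (s \<circ> f) (g j z) = (g j ^^ a) ((s \<circ> f) z)" by blast
qed

lemma Bprop_gen:
  assumes "\<forall>j<k. \<forall>z\<in>\<Omega> j. g j z \<in> \<Omega> j" "b \<in> perm_gen S" "\<forall>s\<in>S. Bprop k \<Omega> g s \<and> Bprop k \<Omega> g (inv s)"
  shows "Bprop k \<Omega> g b"
  using assms(2)
proof (induction rule: perm_gen.induct)
  case gen_id
  then show ?case unfolding Bprop_def by (auto intro: exI[of _ 1])
next
  case (gen_mult s f)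
  have "Bprop k \<Omega> g s" using gen_mult assms(3) by blast
  from Bprop_comp[OF assms(1) this gen_mult.IH] show ?case .
next
  case (gen_inv s f)
  have "Bprop k \<Omega> g (inv s)" using gen_inv assms(3) by blast
  from Bprop_comp[OF assms(1) this gen_inv.IH] show ?case .
qed

lemma cancel_mod:
  assumes "prime (p::nat)" "(a*m) mod p = (b*m) mod p" "m mod p \<noteq> 0"
  shows "a mod p = b mod p"
proof -
  have nd: "\<not> p dvd m" using assms(3) by (simp add: dvd_eq_mod_eq_0)
  have *: "x mod p = y mod p" if "y \<le> x" "(x*m) mod p = (y*m) mod p" for x y
  proof -
    have "p dvd x*m - y*m" using that mod_eq_dvd_iff_nat by (simp add: mult_le_mono1)
    then have "p dvd (x - y)*m" by (simp add: diff_mult_distrib)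
    then have "p dvd x - y" using nd assms(1) prime_dvd_mult_iff by blast
    then show ?thesis using that(1) mod_eq_dvd_iff_nat by blast
  qed
  show ?thesis
  proof (cases "b \<le> a")
    case True then show ?thesis using * assms(2) by blast
  next
    case False then show ?thesis using *[of a b] assms(2) by simp
  qed
qed
theorem lemma4p8:
  fixes p k s n :: nat
    and H :: "(nat \<Rightarrow> nat) set"
    and \<Omega> :: "nat \<Rightarrow> nat set"
    and g :: "nat \<Rightarrow> nat \<Rightarrow> nat"
    and M :: "nat \<Rightarrow> nat \<Rightarrow> nat"
    and b x y :: "nat \<Rightarrow> nat"
  assumes p_prime: "prime p"
    and n_def: "n = p * k"
    (* H is a subgroup of S_n = Sym({0..<n}) *)
    and H_perm: "\<forall>h\<in>H. h permutes {0..<n}"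
    and H_id: "id \<in> H"
    and H_mult: "\<forall>h1\<in>H. \<forall>h2\<in>H. h1 \<circ> h2 \<in> H"
    and H_inv: "\<forall>h\<in>H. inv h \<in> H"
    (* the orbits of H are \<Omega>_0,...,\<Omega>_{k-1}, each of size p *)
    and orb_cover: "(\<Union>i<k. \<Omega> i) = {0..<n}"
    and orb_disj: "\<forall>i<k. \<forall>j<k. i \<noteq> j \<longrightarrow> \<Omega> i \<inter> \<Omega> j = {}"
    and orb_card: "\<forall>i<k. card (\<Omega> i) = p"
    and orb_orbit: "\<forall>i<k. \<forall>z\<in>\<Omega> i. perm_orbit H z = \<Omega> i"
    (* G_i = H|_{\<Omega>_i} is cyclic of order p, generated by g_i *)
    and G_gen: "\<forall>i<k. restr_group H (\<Omega> i) = {g i ^^ r | r. r < p}"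
    and G_card: "\<forall>i<k. card (restr_group H (\<Omega> i)) = p"
    (* g_i is the conjugate of g_1 via a bijection \<Omega>_1 \<rightarrow> \<Omega>_i witnessing
       a permutation isomorphism G_1 \<rightarrow> G_i *)
    and g_conj: "\<forall>i<k. \<exists>\<sigma>. bij_betw \<sigma> (\<Omega> 0) (\<Omega> i) \<and>
                    (\<forall>z\<in>\<Omega> 0. g i (\<sigma> z) = \<sigma> (g 0 z)) \<and>
                    (\<forall>h\<in>restr_group H (\<Omega> 0). \<exists>h'\<in>restr_group H (\<Omega> i).
                        \<forall>z\<in>\<Omega> 0. h' (\<sigma> z) = \<sigma> (h z))"
    (* |H| = p^s and |H|_{\<Omega>_1 \<union> ... \<union> \<Omega>_s}| = p^s *)
    and H_card: "card H = p ^ s"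
    and s_le: "s \<le> k"
    and H_first: "card (restr_group H (\<Union>i<s. \<Omega> i)) = p ^ s"
    (* M is the generator matrix of \<gamma>(H) in standard form *)
    and M_std: "std_gen_matrix p s k M (gamma_image g p k H)"
    (* b \<in> N_B(H) *)
    and b_norm: "b \<in> normalizer_in (Bgroup H \<Omega> k) H"
    (* x, y standard generators of H with non-disjoint supports *)
    and x_std: "\<exists>i<s. x = gamma_inv g k (mrow k M i)"
    and y_std: "\<exists>i<s. y = gamma_inv g k (mrow k M i)"
    and supp_meet: "supp x \<inter> supp y \<noteq> {}"
  shows "\<exists>a. 1 \<le> a \<and> a < p \<and> conjp x b = x ^^ a \<and> conjp y b = y ^^ a"
proof -
  have p1: "1 < p" using p_prime prime_gt_1_nat by blast
  define G where "G j = restr_group H (\<Omega> j)" for j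
  have Hpres: "h z \<in> \<Omega> j" if "h \<in> H" "j < k" "z \<in> \<Omega> j" for h j z
  proof -
    have "h z \<in> perm_orbit H z" using that unfolding perm_orbit_def by blast
    then show ?thesis using orb_orbit that by blast
  qed
  have Hinj: "inj h" if "h \<in> H" for h using H_perm that permutes_inj by blast
  have Hpow: "h ^^ m \<in> H" if "h \<in> H" for h m
    using that by (induction m) (auto simp: H_id H_mult)
  have ginG: "g j \<in> G j" if "j < k" for j
  proof -
    have "g j ^^ 1 \<in> {g j ^^ r | r. r < p}" using p1 by blast
    then show ?thesis using G_gen that G_def by simp
  qed
  have ghex: "\<exists>h\<in>H. g j = restr_perm h (\<Omega> j)" if "j < k" for j
    using ginG[OF that] unfolding G_def restr_group_def by blast
  have g_out: "g j z = z" if "j < k" "z \<notin> \<Omega> j" for j z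
    using ghex[OF that(1)] that(2) by (auto simp: restr_perm_def)
  have g_in: "\<forall>z\<in>\<Omega> j. g j z \<in> \<Omega> j" if "j < k" for j
    using ghex[OF that] Hpres that by (auto simp: restr_perm_def)
  have g_inj: "inj (g j)" if jk: "j < k" for j
  proof -
    obtain h where h: "h \<in> H" "g j = restr_perm h (\<Omega> j)" using ghex[OF jk] by blast
    have "\<forall>z\<in>\<Omega> j. h z \<in> \<Omega> j" using Hpres h(1) jk by blast
    then show ?thesis using restr_inj[OF Hinj[OF h(1)]] h(2) by simp
  qed
  have g_powG: "g j ^^ m \<in> G j" if jk: "j < k" for j m
  proof -
    obtain h where h: "h \<in> H" "g j = restr_perm h (\<Omega> j)" using ghex[OF jk] by blast
    have "restr_perm (h ^^ m) (\<Omega> j) = g j ^^ m"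
      using restr_pow[of "\<Omega> j" h m] h Hpres that by auto
    then show ?thesis using Hpow[OF h(1)] unfolding G_def restr_group_def by (metis image_eqI)
  qed
  have G_eq: "G j = (\<lambda>r. g j ^^ r) ` {..<p}" if "j < k" for j
    using G_gen that unfolding G_def by auto
  have inj_pow: "inj_on (\<lambda>r. g j ^^ r) {..<p}" if "j < k" for j
  proof -
    have "card (G j) = p" using G_card that unfolding G_def by simp
    then have "card ((\<lambda>r. g j ^^ r) ` {..<p}) = card {..<p}" using G_eq[OF that] by simp
    then show ?thesis using inj_on_iff_eq_card[of "{..<p}"] by blast
  qed
  have g_p: "g j ^^ p = id" if jk: "j < k" for j
  proof -
    obtain r where r: "r < p" "g j ^^ p = g j ^^ r" using g_powG[OF jk, of p] G_eq[OF jk] by auto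
    have "g j ^^ r \<circ> g j ^^ (p - r) = g j ^^ r \<circ> id" using r by (simp add: funpow_add[symmetric])
    then have e: "g j ^^ (p - r) = id"
      using inj_fn[OF g_inj[OF that], of r] by (simp add: fun_eq_iff inj_def)
    have "r = 0"
    proof (rule ccontr)
      assume "r \<noteq> 0"
      then have "p - r \<in> {..<p}" "0 \<in> {..<p}" using r by auto
      moreover have "g j ^^ (p - r) = g j ^^ 0" using e by simp
      ultimately have "p - r = 0" using inj_pow[OF that] by (meson inj_onD)
      then show False using r by simp
    qed
    then show ?thesis using r by simp
  qed
  have id_pow: "(id::nat\<Rightarrow>nat) ^^ q = id" for q by (induction q) auto
  have g_mod: "g j ^^ m = g j ^^ (m mod p)" if "j < k" for j m
  proof -
    have "m = m mod p + p * (m div p)" by simp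
    then have "g j ^^ m = g j ^^ (m mod p) \<circ> (g j ^^ p) ^^ (m div p)"
      by (metis funpow_add funpow_mult)
    then show ?thesis using g_p[OF that] id_pow by simp
  qed
  have g_eq_iff: "(g j ^^ m1 = g j ^^ m2) \<longleftrightarrow> m1 mod p = m2 mod p" if "j < k" for j m1 m2
  proof
    assume "g j ^^ m1 = g j ^^ m2"
    then have "g j ^^ (m1 mod p) = g j ^^ (m2 mod p)" using g_mod[OF that] by metis
    moreover have "m1 mod p \<in> {..<p}" "m2 mod p \<in> {..<p}" using p1 by auto
    ultimately show "m1 mod p = m2 mod p" using inj_pow[OF that] by (meson inj_onD)
  next
    assume "m1 mod p = m2 mod p"
    then show "g j ^^ m1 = g j ^^ m2" using g_mod[OF that] by metis
  qed
  have g_ext: "g j ^^ m1 = g j ^^ m2" if "j < k" "\<forall>z\<in>\<Omega> j. (g j ^^ m1) z = (g j ^^ m2) z" for j m1 m2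
  proof
    fix z show "(g j ^^ m1) z = (g j ^^ m2) z"
    proof (cases "z \<in> \<Omega> j")
      case False
      then have "(g j ^^ m1) z = z" "(g j ^^ m2) z = z" using g_out[OF that(1)] funpow_fix by metis+
      then show ?thesis by simp
    qed (use that in auto)
  qed
  define X where "X i = gamma_inv g k (mrow k M i)" for i
  have X_pt: "X i z = (g l ^^ M i l) z" if "l < k" "z \<in> \<Omega> l" for i l z
  proof -
    have "foldr (\<lambda>m f. (\<lambda>m. g m ^^ mrow k M i m) m \<circ> f) [0..<k] id z
       = (if l \<in> set [0..<k] then (g l ^^ mrow k M i l) z else z)"
    proof (rule foldr_pt[where \<Omega> = \<Omega>])
      show "\<forall>m\<in>set [0..<k]. (\<forall>z. z \<notin> \<Omega> m \<longrightarrow> (g m ^^ mrow k M i m) z = z) \<and>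
              (\<forall>z\<in>\<Omega> m. (g m ^^ mrow k M i m) z \<in> \<Omega> m)"
      proof (intro ballI conjI allI impI)
        fix m z assume m: "m \<in> set [0..<k]"
        then have mk: "m < k" by simp
        show "z \<notin> \<Omega> m \<Longrightarrow> (g m ^^ mrow k M i m) z = z" using g_out[OF mk] funpow_fix by metis
        show "z \<in> \<Omega> m \<Longrightarrow> (g m ^^ mrow k M i m) z \<in> \<Omega> m" using g_in[OF mk] funpow_into by metis
      qed
      show "\<forall>m\<in>set [0..<k]. m \<noteq> l \<longrightarrow> \<Omega> m \<inter> \<Omega> l = {}" using orb_disj that by auto
    qed (use that in auto)
    then show ?thesis using that unfolding X_def gamma_inv_def mrow_def by simp
  qed
  have M_std': "\<forall>i<s. \<forall>j<k. M i j < p" "\<forall>i<s. \<forall>j<s. M i j = (if i = j then 1 else 0)"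
    "row_space p s k M = gamma_image g p k H" using M_std unfolding std_gen_matrix_def by auto
  have X_H: "X i \<in> H" if "i < s" for i
  proof -
    define c where "c i' = (if i' = i then 1 else (0::nat))" for i'
    have "(\<lambda>j. if j < k then (\<Sum>i'<s. c i' * M i' j) mod p else 0) = mrow k M i"
    proof
      fix j
      have "(\<Sum>i'<s. c i' * M i' j) = (\<Sum>i'<s. if i' = i then M i' j else 0)"
        by (rule sum.cong) (auto simp: c_def)
      also have "\<dots> = M i j" using that by simp
      finally have "(\<Sum>i'<s. c i' * M i' j) = M i j" .
      then show "(if j < k then (\<Sum>i'<s. c i' * M i' j) mod p else 0) = mrow k M i j"
        using M_std'(1) that by (simp add: mrow_def)
    qed
    moreover have "\<forall>i'<s. c i' < p" using p1 unfolding c_def by simp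
    ultimately have "mrow k M i \<in> row_space p s k M" unfolding row_space_def
      by (intro CollectI exI[of _ c] conjI) auto
    then show ?thesis using M_std'(3) unfolding gamma_image_def X_def by simp
  qed
  have X_pow: "(X i ^^ m) z = (g l ^^ (M i l * m)) z" if "l < k" "z \<in> \<Omega> l" for i l z m
  proof -
    have "(X i ^^ m) z = ((g l ^^ M i l) ^^ m) z"
    proof (rule funpow_agree[where A = "\<Omega> l"])
      show "\<forall>z\<in>\<Omega> l. X i z = (g l ^^ M i l) z" using X_pt that(1) by blast
      show "\<forall>z\<in>\<Omega> l. (g l ^^ M i l) z \<in> \<Omega> l" using funpow_into[OF g_in[OF that(1)]] by blast
    qed (use that in auto)
    then show ?thesis by (simp add: funpow_mult)
  qed
  have Hext: "h1 = h2" if "h1 \<in> H" "h2 \<in> H" "\<forall>l<s. \<forall>z\<in>\<Omega> l. h1 z = h2 z" for h1 h2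
  proof -
    define U where "U = (\<Union>l<s. \<Omega> l)"
    have "0 < card H" using H_card p1 by simp
    then have fH: "finite H" using card_gt_0_iff by blast
    have "inj_on (\<lambda>h. restr_perm h U) H"
    proof -
      have "card ((\<lambda>h. restr_perm h U) ` H) = card H" using H_first H_card unfolding U_def restr_group_def by simp
      then show ?thesis using inj_on_iff_eq_card[OF fH] by blast
    qed
    moreover have "restr_perm h1 U = restr_perm h2 U"
      using that(3) unfolding U_def restr_perm_def by (auto simp: fun_eq_iff)
    ultimately show ?thesis using that by (meson inj_onD)
  qed
  have Sprop: "Bprop k \<Omega> g s" if "i < k" "s \<in> sym_normalizer (\<Omega> i) (G i)" for i s
  proof -
    have sp: "s permutes \<Omega> i" and im: "(\<lambda>\<tau>. conjp \<tau> s) ` (G i) = G i"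
      using that by (auto simp: sym_normalizer_def)
    have "\<forall>j<k. s ` \<Omega> j = \<Omega> j \<and> (\<exists>a. \<forall>z\<in>\<Omega> j. s (g j z) = (g j ^^ a) (s z))"
    proof (intro allI impI)
      fix j assume j: "j < k"
      show "s ` \<Omega> j = \<Omega> j \<and> (\<exists>a. \<forall>z\<in>\<Omega> j. s (g j z) = (g j ^^ a) (s z))"
      proof (cases "j = i")
        case True
        have "conjp (g i) s \<in> G i" using im ginG[OF that(1)] by blast
        then obtain r where r: "conjp (g i) s = g i ^^ r" using G_gen \<open>i < k\<close> unfolding G_def by auto
        have "\<forall>z\<in>\<Omega> i. s (g i z) = (g i ^^ r) (s z)"
        proof
          fix z assume "z \<in> \<Omega> i"
          have "(g i ^^ r) (s z) = s (g i (inv s (s z)))" using r unfolding conjp_def by (metis comp_apply)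
          then show "s (g i z) = (g i ^^ r) (s z)" using permutes_inverses(2)[OF sp] by simp
        qed
        then show ?thesis using True permutes_image[OF sp] by blast
      next
        case False
        then have dis: "\<Omega> j \<inter> \<Omega> i = {}" using orb_disj j that(1) by blast
        have sfix: "s z = z" if "z \<in> \<Omega> j" for z using permutes_not_in[OF sp] dis that by blast
        have "s ` \<Omega> j = \<Omega> j" using sfix by simp
        moreover have "\<forall>z\<in>\<Omega> j. s (g j z) = (g j ^^ 1) (s z)" using sfix g_in[OF j] by simp
        ultimately show ?thesis by blast
      qed
    qed
    then show ?thesis using permutes_inj[OF sp] unfolding Bprop_def by blast
  qed
  have Bp: "Bprop k \<Omega> g b"
  proof (rule Bprop_gen)
    show "\<forall>j<k. \<forall>z\<in>\<Omega> j. g j z \<in> \<Omega> j" using g_in by blast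
    show "b \<in> perm_gen (\<Union>i<k. sym_normalizer (\<Omega> i) (restr_group H (\<Omega> i)))"
      using b_norm unfolding normalizer_in_def Bgroup_def by blast
    show "\<forall>s\<in>(\<Union>i<k. sym_normalizer (\<Omega> i) (restr_group H (\<Omega> i))). Bprop k \<Omega> g s \<and> Bprop k \<Omega> g (inv s)"
      using Sprop normalizer_inv unfolding G_def by blast
  qed
  have binj: "inj b" and bim: "\<And>j. j < k \<Longrightarrow> b ` \<Omega> j = \<Omega> j" using Bp unfolding Bprop_def by auto
  have "\<forall>j. \<exists>a. j < k \<longrightarrow> (\<forall>z\<in>\<Omega> j. b (g j z) = (g j ^^ a) (b z))" using Bp unfolding Bprop_def by blast
  from choice[OF this] obtain A where A0: "\<forall>j. j < k \<longrightarrow> (\<forall>z\<in>\<Omega> j. b (g j z) = (g j ^^ A j) (b z))" by blast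
  then have A: "\<And>j. j < k \<Longrightarrow> \<forall>z\<in>\<Omega> j. b (g j z) = (g j ^^ A j) (b z)" by blast
  have Cj: "conjp (X i) b w = (g l ^^ (A l * M i l)) w" if "l < k" "w \<in> \<Omega> l" for i l w
  proof -
    obtain z where z: "z \<in> \<Omega> l" "w = b z" using bim[OF \<open>l < k\<close>] \<open>w \<in> \<Omega> l\<close> by blast
    have "conjp (X i) b w = b (X i z)" using z binj unfolding conjp_def by simp
    also have "\<dots> = b ((g l ^^ M i l) z)" using X_pt that z by simp
    also have "\<dots> = (g l ^^ (A l * M i l)) (b z)"
      by (rule funpow_conj_iter) (use g_in A that z in auto)
    finally show ?thesis using z by simp
  qed
  have conjH: "conjp (X i) b \<in> H" if "i < s" for i
    using b_norm X_H[OF that] unfolding normalizer_in_def by blast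
  have XA: "conjp (X i) b = X i ^^ A i" if "i < s" for i
  proof (rule Hext)
    show "conjp (X i) b \<in> H" using conjH[OF that] .
    show "X i ^^ A i \<in> H" using Hpow X_H that by blast
    show "\<forall>l<s. \<forall>z\<in>\<Omega> l. conjp (X i) b z = (X i ^^ A i) z"
    proof (intro allI impI ballI)
      fix l z assume l: "l < s" and z: "z \<in> \<Omega> l"
      have lk: "l < k" using l s_le by simp
      show "conjp (X i) b z = (X i ^^ A i) z"
        using Cj[OF lk z] X_pow[OF lk z] M_std'(2) l that by (cases "l = i") auto
    qed
  qed
  have Xmod: "X i ^^ m1 = X i ^^ m2" if "i < s" "m1 mod p = m2 mod p" for i m1 m2
  proof (rule Hext)
    show "X i ^^ m1 \<in> H" "X i ^^ m2 \<in> H" using Hpow X_H that by blast+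
    show "\<forall>l<s. \<forall>z\<in>\<Omega> l. (X i ^^ m1) z = (X i ^^ m2) z"
    proof (intro allI impI ballI)
      fix l z assume l: "l < s" and z: "z \<in> \<Omega> l"
      have lk: "l < k" using l s_le by simp
      have "M i l * m1 mod p = M i l * m2 mod p" using that(2) mod_mult_cong by blast
      then have "g l ^^ (M i l * m1) = g l ^^ (M i l * m2)" using g_eq_iff[OF lk] by blast
      then show "(X i ^^ m1) z = (X i ^^ m2) z" using X_pow[OF lk z] by simp
    qed
  qed
  have Anz: "A i mod p \<noteq> 0" if "i < s" for i
  proof
    assume a0: "A i mod p = 0"
    have ik: "i < k" using that s_le by simp
    have "g i ^^ A i = g i ^^ 0" by (subst g_eq_iff[OF ik]) (simp add: a0)
    then have "\<forall>z\<in>\<Omega> i. b (g i z) = b z" using A[OF ik] by simp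
    then have "\<forall>z\<in>\<Omega> i. (g i ^^ 1) z = (g i ^^ 0) z" using binj by (simp add: inj_eq)
    then have "g i ^^ 1 = g i ^^ 0" using g_ext[OF ik] by blast
    then have "1 mod p = 0 mod p" using g_eq_iff[OF ik, of 1 0] by blast
    then show False using p1 by simp
  qed
  have Rel: "(A j * M i j) mod p = (A i * M i j) mod p" if "i < s" "j < k" for i j
  proof -
    have "\<forall>z\<in>\<Omega> j. (g j ^^ (A j * M i j)) z = (g j ^^ (M i j * A i)) z"
    proof
      fix z assume z: "z \<in> \<Omega> j"
      have "(g j ^^ (A j * M i j)) z = conjp (X i) b z" using Cj[OF that(2) z] by simp
      also have "\<dots> = (X i ^^ A i) z" using XA[OF that(1)] by simp
      also have "\<dots> = (g j ^^ (M i j * A i)) z" using X_pow[OF that(2) z] by simp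
      finally show "(g j ^^ (A j * M i j)) z = (g j ^^ (M i j * A i)) z" .
    qed
    then have "g j ^^ (A j * M i j) = g j ^^ (M i j * A i)" using g_ext[OF that(2)] by blast
    then have "(A j * M i j) mod p = (M i j * A i) mod p" using g_eq_iff[OF that(2)] by blast
    moreover have "M i j * A i = A i * M i j" by (rule mult.commute)
    ultimately show ?thesis by argo
  qed
  obtain i where i0: "i < s" "x = gamma_inv g k (mrow k M i)" using x_std by blast
  then have i: "i < s" "x = X i" by (simp_all add: X_def)
  obtain i' where i0': "i' < s" "y = gamma_inv g k (mrow k M i')" using y_std by blast
  then have i': "i' < s" "y = X i'" by (simp_all add: X_def)
  obtain w where "w \<in> supp x" "w \<in> supp y" using supp_meet by blast
  then have w: "x w \<noteq> w" "y w \<noteq> w" by (simp_all add: supp_def)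
  have "x \<in> H" using X_H[OF i(1)] i(2) by simp
  then have xp: "x permutes {0..<n}" using H_perm by blast
  have "w \<in> {0..<n}"
  proof (rule ccontr)
    assume "w \<notin> {0..<n}"
    then have "x w = w" using permutes_not_in[OF xp] by simp
    then show False using w(1) by simp
  qed
  then have "w \<in> (\<Union>i<k. \<Omega> i)" using orb_cover by argo
  then obtain j where j: "j < k" "w \<in> \<Omega> j" by blast
  have Mnz: "M ii j mod p \<noteq> 0" if "ii < s" "X ii w \<noteq> w" for ii
  proof
    assume "M ii j mod p = 0"
    then have "M ii j mod p = 0 mod p" by simp
    then have "g j ^^ M ii j = g j ^^ 0" using g_eq_iff[OF j(1)] by blast
    then have "(g j ^^ M ii j) w = w" by simp
    moreover have "X ii w = (g j ^^ M ii j) w" using X_pt[OF j] by blast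
    ultimately show False using that(2) by argo
  qed
  have wi: "X i w \<noteq> w" using w(1) unfolding i(2) .
  have wi': "X i' w \<noteq> w" using w(2) unfolding i'(2) .
  have e1: "A j mod p = A i mod p" using cancel_mod[OF p_prime Rel[OF i(1) j(1)] Mnz[OF i(1) wi]] .
  have e2: "A j mod p = A i' mod p" using cancel_mod[OF p_prime Rel[OF i'(1) j(1)] Mnz[OF i'(1) wi']] .
  define a where "a = A i mod p"
  have "A i mod p < p" using p1 by simp
  then have a1: "1 \<le> a" "a < p" using Anz[OF i(1)] unfolding a_def by linarith+
  have m1: "A i mod p = a mod p" unfolding a_def by (rule mod_mod_trivial[symmetric])
  have "A i' mod p = A i mod p" using trans[OF sym[OF e2] e1] .
  then have m2: "A i' mod p = a mod p" using m1 by (rule trans)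
  have c1: "conjp x b = x ^^ a" unfolding i(2) using XA[OF i(1)] Xmod[OF i(1) m1] by (rule trans)
  have c2: "conjp y b = y ^^ a" unfolding i'(2) using XA[OF i'(1)] Xmod[OF i'(1) m2] by (rule trans)
  have t1: "1 \<le> a" by (rule a1(1))
  have t2: "a < p" by (rule a1(2))
  have t3: "conjp x b = x ^^ a" by (rule c1)
  have t4: "conjp y b = y ^^ a" by (rule c2)
  have "1 \<le> a \<and> a < p \<and> conjp x b = x ^^ a \<and> conjp y b = y ^^ a"
    by (rule conjI[OF t1 conjI[OF t2 conjI[OF t3 t4]]])
  then show ?thesis by (rule exI)
qed

end
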